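(* Let $d\ge2$, let $Af(x)=\int_{S^{d-1}}f(x-y)\,d\sigma(y)$ with $\sigma$ surface measure on the unit sphere, and $\Lambda_G(f,g,h)=\int_{\mathbb R^d}Af(x)Ag(x)h(x)\,dx$. If $\Lambda_G(f,g,h)\le C\|f\|_{L^{p_1}(\mathbb R^d)}\|g\|_{L^{p_2}(\mathbb R^d)}\|h\|_{L^{p_3}(\mathbb R^d)}$ for all nonnegative measurable $f,g,h$, then (1) $\frac1{p_1}+\frac1{p_2}+\frac1{p_3}\ge1$; (2) $\frac1{p_1}+\frac1{p_2}+\frac d{p_3}\le d$; (3) $\frac d{p_1}+\frac d{p_2}+\frac1{p_3}\le2d-1$; (4) $\frac d{p_1}+\frac1{p_3}\le d$; (5) $\frac d{p_2}+\frac1{p_3}\le d$. *)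

theory Defs
  imports "HOL-Analysis.Analysis" "HOL-Probability.Essential_Supremum"
begin

text \<open>Surface measure on the unit sphere S^{d-1} of R^d (here R^d = real^'n, d = CARD('n)),
  realised as the cone measure: sigma(E) = d * Lebesgue measure of the cone
  {t y | 0 < t <= 1, y in E}, i.e. the push-forward of Lebesgue measure on the unit ball
  under y |-> y / |y|, scaled by d.  For the round sphere this coincides with the
  (d-1)-dimensional Hausdorff / surface measure.\<close>
definition sphere_surface :: "(real ^ 'n::finite) measure" where
  "sphere_surface = scale_measure (of_nat CARD('n))
     (distr (restrict_space lborel (cball 0 1)) borel (\<lambda>y. y /\<^sub>R norm y))"

definition sph_avg :: "(real ^ 'n::finite \<Rightarrow> real) \<Rightarrow> real ^ 'n \<Rightarrow> ennreal" where
  "sph_avg f x = (\<integral>\<^sup>+ y. ennreal (f (x - y)) \<partial>sphere_surface)"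

definition LambdaG :: "(real ^ 'n::finite \<Rightarrow> real) \<Rightarrow> (real ^ 'n \<Rightarrow> real) \<Rightarrow> (real ^ 'n \<Rightarrow> real) \<Rightarrow> ennreal" where
  "LambdaG f g h = (\<integral>\<^sup>+ x. sph_avg f x * sph_avg g x * ennreal (h x) \<partial>lborel)"

definition Lp_norm :: "ennreal \<Rightarrow> (real ^ 'n::finite \<Rightarrow> real) \<Rightarrow> ennreal" where
  "Lp_norm p f =
     (if p = \<infinity> then esssup lborel (\<lambda>x. ennreal \<bar>f x\<bar>)
      else (let I = (\<integral>\<^sup>+ x. ennreal (\<bar>f x\<bar> powr enn2real p) \<partial>lborel)
            in if I = \<infinity> then \<infinity> else ennreal (enn2real I powr (1 / enn2real p))))"

end

theory Submission
  imports Defs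
begin

lemma Lp_norm_indicator:
  fixes S :: "(real^'n::finite) set"
  assumes S: "S \<in> sets lborel" "emeasure lborel S < \<infinity>" "measure lborel S > 0" and p: "1 \<le> p"
  shows "Lp_norm p (indicator S :: real^'n \<Rightarrow> real) \<le> ennreal (measure lborel S powr enn2real (1/p))"
proof (cases "p = \<infinity>")
  case True
  have "esssup lborel (\<lambda>x. ennreal \<bar>indicator S x :: real\<bar>) \<le> 1"
    by (rule esssup_I) (use S in \<open>auto simp: indicator_def\<close>)
  then show ?thesis using True S by (simp add: Lp_norm_def)
next
  case False
  define r where "r = enn2real p"
  have pt: "p < top" using False by (simp add: top.not_eq_extremum)
  have r: "p = ennreal r" "r \<ge> 1"
    using pt enn2real_mono[OF p pt] by (simp_all add: r_def)
  have eq: "(\<lambda>x. ennreal (\<bar>indicator S x :: real\<bar> powr r)) = indicator S"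
    using r by (auto simp: indicator_def fun_eq_iff)
  have I: "(\<integral>\<^sup>+ x. ennreal (\<bar>indicator S x :: real\<bar> powr enn2real p) \<partial>lborel) = emeasure lborel S"
  proof -
    have "(\<integral>\<^sup>+ x. ennreal (\<bar>indicator S x :: real\<bar> powr enn2real p) \<partial>lborel) = (\<integral>\<^sup>+ x. indicator S x \<partial>lborel)"
      using r by (intro nn_integral_cong) (auto simp: indicator_def)
    also have "\<dots> = emeasure lborel S" using S by simp
    finally show ?thesis .
  qed
  have "1 / p = ennreal (1 / r)" using r divide_ennreal[of 1 r] by simp
  then have q: "enn2real (1/p) = 1 / r" using r by simp
  have "Lp_norm p (indicator S :: real^'n \<Rightarrow> real) = ennreal (measure lborel S powr (1/r))"
    using False I S(2) r unfolding Lp_norm_def Let_def by (simp add: measure_def)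
  then show ?thesis using q by simp
qed



lemma sph_avg_lower:
  fixes A K :: "(real^'n::finite) set"
  assumes A: "A \<in> sets borel" and K: "K \<in> sets lborel" "K \<subseteq> cball 0 1"
    and inA: "\<And>y. y \<in> K \<Longrightarrow> x - y /\<^sub>R norm y \<in> A"
  shows "of_nat CARD('n) * emeasure lborel K \<le> sph_avg (indicator A) x"
proof -
  have meas: "(\<lambda>y::real^'n. y /\<^sub>R norm y) \<in> borel_measurable borel" by measurable
  have m2: "(\<lambda>y::real^'n. ennreal (indicator A (x - y) :: real)) \<in> borel_measurable borel"
    using A by measurable
  have e1: "sph_avg (indicator A) x =
      of_nat CARD('n) * (\<integral>\<^sup>+ y. ennreal (indicator A (x - y)) \<partial>distr (restrict_space lborel (cball 0 1)) borel (\<lambda>y. y /\<^sub>R norm y))"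
    unfolding sph_avg_def sphere_surface_def
    by (rule nn_integral_scale_measure) (use m2 in simp)
  have e2: "(\<integral>\<^sup>+ y. ennreal (indicator A (x - y) :: real) \<partial>distr (restrict_space lborel (cball 0 1)) borel (\<lambda>y. y /\<^sub>R norm y))
     = (\<integral>\<^sup>+ y. ennreal (indicator A (x - y /\<^sub>R norm y) :: real) \<partial>restrict_space lborel (cball 0 1))"
    by (rule nn_integral_distr) (use meas m2 in \<open>auto intro: measurable_restrict_space1\<close>)
  have e3: "(\<integral>\<^sup>+ y. ennreal (indicator A (x - y /\<^sub>R norm y) :: real) \<partial>restrict_space lborel (cball 0 1)) = (\<integral>\<^sup>+ y. ennreal (indicator A (x - y /\<^sub>R norm y) :: real) * indicator (cball 0 1) y \<partial>lborel)"
    by (rule nn_integral_restrict_space) simp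
  have e4: "(\<integral>\<^sup>+ y. indicator K y \<partial>lborel) \<le> (\<integral>\<^sup>+ y. ennreal (indicator A (x - y /\<^sub>R norm y) :: real) * indicator (cball 0 1) y \<partial>lborel)"
    by (rule nn_integral_mono) (use K inA in \<open>auto simp: indicator_def\<close>)
  show ?thesis unfolding e1 e2 e3 using K e4 by (simp add: mult_left_mono)
qed

lemma LambdaG_lower:
  fixes H :: "(real^'n::finite) set"
  assumes H: "H \<in> sets lborel" and a: "a \<ge> 0" and b: "b \<ge> 0"
    and fa: "\<And>x. x \<in> H \<Longrightarrow> ennreal a \<le> sph_avg f x"
    and gb: "\<And>x. x \<in> H \<Longrightarrow> ennreal b \<le> sph_avg g x"
  shows "ennreal (a * b) * emeasure lborel H \<le> LambdaG f g (indicator H)"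
proof -
  have "ennreal (a * b) * emeasure lborel H = (\<integral>\<^sup>+ x. ennreal (a * b) * indicator H x \<partial>lborel)"
    using H by (simp add: nn_integral_cmult_indicator)
  also have "\<dots> \<le> LambdaG f g (indicator H)"
    unfolding LambdaG_def
  proof (rule nn_integral_mono)
    fix x
    show "ennreal (a * b) * indicator H x \<le> sph_avg f x * sph_avg g x * ennreal (indicator H x)"
    proof (cases "x \<in> H")
      case True
      then have "ennreal a * ennreal b \<le> sph_avg f x * sph_avg g x"
        using fa gb by (intro mult_mono) auto
      then show ?thesis using True a b by (simp add: ennreal_mult)
    qed simp
  qed
  finally show ?thesis .
qed



lemma measure_ball_eq:
  fixes c :: "real^'n::finite"
  assumes "r \<ge> 0"
  shows "measure lborel (ball c r) = unit_ball_vol (real CARD('n)) * r ^ CARD('n)"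
  using content_ball[OF assms, of c] by simp

lemma emeasure_ball_eq:
  fixes c :: "real^'n::finite"
  assumes "r \<ge> 0"
  shows "emeasure lborel (ball c r) = ennreal (unit_ball_vol (real CARD('n)) * r ^ CARD('n))"
  using emeasure_ball[OF assms, of c] by simp

lemma dir_bound:
  fixes y e :: "real^'n::finite"
  assumes e: "norm e = 1" and t: "t > 0" and y: "norm (t *\<^sub>R e - y) < s" and yp: "norm y > 0"
  shows "norm (y /\<^sub>R norm y - e) \<le> 2 * s / norm y"
proof -
  have "y /\<^sub>R norm y - e = (1 / norm y) *\<^sub>R (y - norm y *\<^sub>R e)"
    using yp by (simp add: algebra_simps divide_inverse)
  then have eq: "norm (y /\<^sub>R norm y - e) = norm (y - norm y *\<^sub>R e) / norm y"
    using yp by simp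
  have "norm (y - norm y *\<^sub>R e) \<le> norm (y - t *\<^sub>R e) + norm (t *\<^sub>R e - norm y *\<^sub>R e)"
    using norm_triangle_ineq[of "y - t *\<^sub>R e" "t *\<^sub>R e - norm y *\<^sub>R e"] by simp
  also have "norm (t *\<^sub>R e - norm y *\<^sub>R e) = \<bar>t - norm y\<bar>"
    using e by (simp add: scaleR_diff_left[symmetric])
  also have "\<bar>t - norm y\<bar> \<le> norm (t *\<^sub>R e - y)"
    using norm_triangle_ineq3[of "t *\<^sub>R e" y] e t by simp
  finally have "norm (y - norm y *\<^sub>R e) \<le> 2 * s" using y by (simp add: norm_minus_commute)
  then show ?thesis unfolding eq using yp by (simp add: divide_right_mono)
qed

lemma cap_lower:
  fixes e :: "real^'n::finite"
  assumes e: "norm e = 1" and r: "0 < r" "r \<le> 1"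
  obtains K where "K \<in> sets lborel" "K \<subseteq> cball 0 1"
    "\<And>y. y \<in> K \<Longrightarrow> y \<noteq> 0 \<and> norm (y /\<^sub>R norm y - e) < r"
    "ennreal (unit_ball_vol (real CARD('n)) / (2 * 8 ^ CARD('n)) * r ^ (CARD('n) - 1)) \<le> emeasure lborel K"
proof -
  define s where "s = r / 8"
  define N where "N = nat \<lfloor>1 / r\<rfloor>"
  define t where "t = (\<lambda>k::nat. 1/2 + (2 * real k + 1) * s)"
  define B where "B = (\<lambda>k. ball (t k *\<^sub>R e) s)"
  define K where "K = (\<Union>k<N. B k)"
  have s: "s > 0" using r by (simp add: s_def)
  have N1: "real N * r \<le> 1"
  proof -
    have "real N = of_int \<lfloor>1/r\<rfloor>" using r by (simp add: N_def)
    also have "\<dots> \<le> 1/r" by simp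
    finally show ?thesis using r by (simp add: field_simps)
  qed
  have N2: "real N \<ge> 1 / (2 * r)"
  proof -
    have f1: "of_int \<lfloor>1/r\<rfloor> \<ge> (1::real)" using r by (simp add: le_floor_iff)
    have f2: "of_int \<lfloor>1/r\<rfloor> > 1/r - 1" by linarith
    have "of_int \<lfloor>1/r\<rfloor> \<ge> 1 / (2 * r)"
    proof (cases "1/r \<ge> 2")
      case True then show ?thesis using f2 by (simp add: field_simps)
    next
      case False
      then have "2 * r \<ge> 1" using r by (simp add: field_simps)
      moreover have "2 * r * 1 \<le> 2 * r * of_int \<lfloor>1/r\<rfloor>" using f1 r by (intro mult_left_mono) auto
      ultimately have "1 \<le> 2 * r * of_int \<lfloor>1/r\<rfloor>" by linarith
      then show ?thesis using r by (simp add: field_simps)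
    qed
    moreover have "real N = of_int \<lfloor>1/r\<rfloor>" using r by (simp add: N_def)
    ultimately show ?thesis by simp
  qed
  have inB: "y \<noteq> 0 \<and> norm y \<le> 1 \<and> norm (y /\<^sub>R norm y - e) < r" if k: "k < N" and y: "y \<in> B k" for k y
  proof -
    have yd: "norm (t k *\<^sub>R e - y) < s" using y by (simp add: B_def dist_norm)
    have tk: "t k \<ge> 1/2 + s" using s by (simp add: t_def)
    have tk2: "t k + s \<le> 1"
    proof -
      have "real k + 1 \<le> real N" using k by simp
      then have "(2 * real k + 2) * s \<le> 2 * real N * s" using s by simp
      also have "\<dots> = real N * r / 4" by (simp add: s_def)
      also have "\<dots> \<le> 1/4" using N1 by simp
      finally show ?thesis by (simp add: t_def algebra_simps)
    qed
    have tpos: "t k > 0" using tk s by linarith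
    have nte: "norm (t k *\<^sub>R e) = t k" using e tpos by (simp only: norm_scaleR abs_of_pos mult_1_right)
    have n1: "norm y \<ge> t k - s"
      using norm_triangle_ineq2[of "t k *\<^sub>R e" y] yd nte by linarith
    have n2: "norm y \<le> t k + s"
      using norm_triangle_ineq3[of y "t k *\<^sub>R e"] yd nte norm_minus_commute[of y "t k *\<^sub>R e"] by linarith
    have ny: "norm y \<ge> 1/2" using n1 tk by linarith
    have yn: "norm y > 0" using ny by linarith
    have "norm (y /\<^sub>R norm y - e) \<le> 2 * s / norm y"
      by (rule dir_bound[OF e tpos yd]) (use ny in linarith)
    also have "\<dots> \<le> 2 * s / (1/2)" using ny s by (intro frac_le) simp_all
    also have "\<dots> < r" using r by (simp add: s_def)
    finally have "norm (y /\<^sub>R norm y - e) < r" .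
    moreover have "y \<noteq> 0" using yn by auto
    moreover have "norm y \<le> 1" using n2 tk2 by linarith
    ultimately show ?thesis by blast
  qed
  have disj: "disjoint_family_on B {..<N}"
    unfolding disjoint_family_on_def
  proof (intro ballI impI)
    fix k l assume kl: "k \<in> {..<N}" "l \<in> {..<N}" "k \<noteq> l"
    show "B k \<inter> B l = {}"
    proof (rule ccontr)
      assume "B k \<inter> B l \<noteq> {}"
      then obtain y where y: "y \<in> B k" "y \<in> B l" by blast
      have y1: "norm (t k *\<^sub>R e - y) < s" using y by (simp add: B_def dist_norm)
      have y2: "norm (y - t l *\<^sub>R e) < s" using y norm_minus_commute[of y "t l *\<^sub>R e"] by (simp add: B_def dist_norm)
      have "norm (t k *\<^sub>R e - t l *\<^sub>R e) < 2 * s"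
        using y1 y2 norm_triangle_lt[of "t k *\<^sub>R e - y" "y - t l *\<^sub>R e" "2 * s"] by simp
      also have "norm (t k *\<^sub>R e - t l *\<^sub>R e) = \<bar>t k - t l\<bar>"
        using e by (simp add: scaleR_diff_left[symmetric])
      also have "\<bar>t k - t l\<bar> = 2 * s * \<bar>real k - real l\<bar>"
      proof -
        have "t k - t l = (2 * s) * (real k - real l)" by (simp add: t_def algebra_simps)
        then show ?thesis using s by (simp add: abs_mult)
      qed
      finally have "\<bar>real k - real l\<bar> < 1" using s by simp
      then show False using kl by linarith
    qed
  qed
  have mK: "emeasure lborel K = (\<Sum>k<N. emeasure lborel (B k))"
    unfolding K_def
  proof (rule sum_emeasure[symmetric])
    show "B ` {..<N} \<subseteq> sets lborel" unfolding B_def by (intro image_subsetI borel_open) simp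
  qed (use disj in simp_all)
  also have "\<dots> = ennreal (real N * (unit_ball_vol (real CARD('n)) * s ^ CARD('n)))"
  proof -
    have "\<And>k. emeasure lborel (B k) = ennreal (unit_ball_vol (real CARD('n)) * s ^ CARD('n))"
      using s unfolding B_def by (intro emeasure_ball_eq) simp
    then have "(\<Sum>k<N. emeasure lborel (B k)) = of_nat N * ennreal (unit_ball_vol (real CARD('n)) * s ^ CARD('n))"
      by simp
    also have "\<dots> = ennreal (real N) * ennreal (unit_ball_vol (real CARD('n)) * s ^ CARD('n))"
      by (simp only: ennreal_of_nat_eq_real_of_nat)
    also have "\<dots> = ennreal (real N * (unit_ball_vol (real CARD('n)) * s ^ CARD('n)))"
      by (rule ennreal_mult[symmetric]) (use s in auto)
    finally show ?thesis .
  qed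
  finally have mK: "emeasure lborel K = ennreal (real N * (unit_ball_vol (real CARD('n)) * s ^ CARD('n)))" .
  have "unit_ball_vol (real CARD('n)) / (2 * 8 ^ CARD('n)) * r ^ (CARD('n) - 1)
        = (1 / (2 * r)) * (unit_ball_vol (real CARD('n)) * s ^ CARD('n))"
  proof -
    have "r ^ CARD('n) = r ^ Suc (CARD('n) - 1)" by simp
    also have "\<dots> = r * r ^ (CARD('n) - 1)" by (rule power_Suc)
    finally have h1: "r ^ CARD('n) = r * r ^ (CARD('n) - 1)" .
    have h2: "s ^ CARD('n) = r ^ CARD('n) / 8 ^ CARD('n)" unfolding s_def by (rule power_divide)
    have hs: "s ^ CARD('n) = r * r ^ (CARD('n) - 1) / 8 ^ CARD('n)" unfolding h2 h1 ..
    have aux: "\<And>V c m::real. c > 0 \<Longrightarrow> V / (2 * c) * m = (1 / (2 * r)) * (V * (r * m / c))"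
      using r by (simp add: field_simps)
    show ?thesis unfolding hs by (rule aux) simp
  qed
  also have "\<dots> \<le> real N * (unit_ball_vol (real CARD('n)) * s ^ CARD('n))"
    by (rule mult_right_mono[OF N2]) (use s in simp)
  finally have le: "ennreal (unit_ball_vol (real CARD('n)) / (2 * 8 ^ CARD('n)) * r ^ (CARD('n) - 1)) \<le> emeasure lborel K"
    unfolding mK by (simp add: ennreal_leI)
  show ?thesis
  proof (rule that[OF _ _ _ le])
    have "open K" unfolding K_def B_def by (intro open_UN ballI) simp
    then show "K \<in> sets lborel" by simp
    show "K \<subseteq> cball 0 1" using inB by (auto simp: K_def)
    show "\<And>y. y \<in> K \<Longrightarrow> y \<noteq> 0 \<and> norm (y /\<^sub>R norm y - e) < r" using inB by (auto simp: K_def)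
  qed
qed



lemma pow_diff_le:
  fixes x y :: real
  assumes "0 \<le> y" "y \<le> x"
  shows "x ^ Suc n - y ^ Suc n \<le> real (Suc n) * (x - y) * x ^ n"
proof (induction n)
  case 0 then show ?case by simp
next
  case (Suc n)
  have "x ^ Suc (Suc n) - y ^ Suc (Suc n) = x * (x ^ Suc n - y ^ Suc n) + y ^ Suc n * (x - y)"
    by (simp add: algebra_simps)
  also have "\<dots> \<le> x * (real (Suc n) * (x - y) * x ^ n) + x ^ Suc n * (x - y)"
  proof (rule add_mono)
    show "x * (x ^ Suc n - y ^ Suc n) \<le> x * (real (Suc n) * (x - y) * x ^ n)"
      using Suc assms by (intro mult_left_mono) auto
    show "y ^ Suc n * (x - y) \<le> x ^ Suc n * (x - y)"
      using assms by (intro mult_right_mono power_mono) auto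
  qed
  also have "\<dots> = real (Suc (Suc n)) * (x - y) * x ^ Suc n"
    by (simp add: algebra_simps)
  finally show ?case .
qed

lemma shell_facts:
  fixes a b :: real
  assumes "0 \<le> a" "a < b"
  defines "H \<equiv> ball (0::real^'n::finite) b - cball 0 a"
  shows "H \<in> sets lborel" "emeasure lborel H < \<infinity>"
    "measure lborel H = unit_ball_vol (real CARD('n)) * (b ^ CARD('n) - a ^ CARD('n))"
proof -
  show "H \<in> sets lborel" unfolding H_def by simp
  have "emeasure lborel H \<le> emeasure lborel (ball (0::real^'n) b)"
    unfolding H_def by (rule emeasure_mono) auto
  then show "emeasure lborel H < \<infinity>" using emeasure_lborel_ball_finite[of "0::real^'n" b]
    by (meson le_less_trans)
  have "measure lborel H = measure lborel (ball (0::real^'n) b) - measure lborel (cball (0::real^'n) a)"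
    unfolding H_def
    by (rule measure_Diff) (use assms emeasure_lborel_ball_finite[of "0::real^'n" b] in auto)
  also have "measure lborel (cball (0::real^'n) a) = unit_ball_vol (real CARD('n)) * a ^ CARD('n)"
    using content_cball[OF assms(1), of "0::real^'n"] by simp
  also have "measure lborel (ball (0::real^'n) b) = unit_ball_vol (real CARD('n)) * b ^ CARD('n)"
    using content_ball[of b "0::real^'n"] assms by simp
  finally show "measure lborel H = unit_ball_vol (real CARD('n)) * (b ^ CARD('n) - a ^ CARD('n))"
    by (simp add: algebra_simps)
qed



lemma small_exp:
  fixes A B a b d0 :: real
  assumes A: "A > 0" and d0: "d0 > 0"
    and H: "\<And>d. 0 < d \<Longrightarrow> d \<le> d0 \<Longrightarrow> A * d powr a \<le> B * d powr b"
  shows "b \<le> a"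
proof (rule ccontr)
  assume "\<not> b \<le> a"
  then have ba: "b - a > 0" by simp
  have B: "B > 0"
  proof (rule ccontr)
    assume "\<not> B > 0"
    then have "B * d0 powr b \<le> 0" using d0 by (simp add: mult_nonpos_nonneg)
    moreover have "A * d0 powr a > 0" using A d0 by simp
    ultimately show False using H[OF d0] by simp
  qed
  define d where "d = min d0 ((A / (2 * B)) powr (1 / (b - a)))"
  have dpos: "d > 0" using A B d0 by (simp add: d_def)
  have "A * d powr a \<le> B * d powr b" using H[of d] dpos by (simp add: d_def)
  moreover have "d powr b = d powr (b - a) * d powr a" using dpos by (simp add: powr_add[symmetric])
  ultimately have "A * d powr a \<le> (B * d powr (b - a)) * d powr a" by (simp add: mult.assoc)
  then have "A \<le> B * d powr (b - a)" using dpos by simp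
  moreover have "d powr (b - a) \<le> ((A / (2 * B)) powr (1 / (b - a))) powr (b - a)"
    using dpos ba by (intro powr_mono2) (auto simp: d_def)
  moreover have "((A / (2 * B)) powr (1 / (b - a))) powr (b - a) = A / (2 * B)"
    using A B ba by (simp add: powr_powr)
  ultimately have "A \<le> B * (A / (2 * B))"
    by (smt (verit) B mult_left_mono)
  then show False using A B by (simp add: field_simps)
qed

lemma large_exp:
  fixes A B a b R0 :: real
  assumes A: "A > 0" and R0: "R0 > 0"
    and H: "\<And>R. R0 \<le> R \<Longrightarrow> A * R powr a \<le> B * R powr b"
  shows "a \<le> b"
proof -
  have "- b \<le> - a"
  proof (rule small_exp[OF A, of "1 / R0"])
    show "0 < 1 / R0" using R0 by simp
  next
    fix d :: real assume d: "0 < d" "d \<le> 1 / R0"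
    have "R0 \<le> 1 / d" using d R0 by (simp add: field_simps)
    then have h: "A * (1/d) powr a \<le> B * (1/d) powr b" by (rule H)
    have e1: "(1/d) powr a = d powr - a" using d by (simp add: powr_minus_divide powr_divide)
    have e2: "(1/d) powr b = d powr - b" using d by (simp add: powr_minus_divide powr_divide)
    show "A * d powr - a \<le> B * d powr - b" using h unfolding e1 e2 .
  qed
  then show ?thesis by simp
qed



lemma apply_bound:
  fixes p1 p2 p3 :: ennreal and C :: real and F G H :: "(real^'n::finite) set"
  assumes p_range: "1 \<le> p1" "1 \<le> p2" "1 \<le> p3"
    and bound: "\<And>f g h :: real ^ 'n \<Rightarrow> real.
        f \<in> borel_measurable lborel \<Longrightarrow> g \<in> borel_measurable lborel \<Longrightarrow>
        h \<in> borel_measurable lborel \<Longrightarrow>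
        (\<forall>x. 0 \<le> f x) \<Longrightarrow> (\<forall>x. 0 \<le> g x) \<Longrightarrow> (\<forall>x. 0 \<le> h x) \<Longrightarrow>
        LambdaG f g h \<le> ennreal C * Lp_norm p1 f * Lp_norm p2 g * Lp_norm p3 h"
    and F: "F \<in> sets lborel" "emeasure lborel F < \<infinity>" "measure lborel F > 0"
    and G: "G \<in> sets lborel" "emeasure lborel G < \<infinity>" "measure lborel G > 0"
    and H: "H \<in> sets lborel" "emeasure lborel H < \<infinity>" "measure lborel H > 0"
    and a: "a \<ge> 0" and b: "b \<ge> 0"
    and fa: "\<And>x. x \<in> H \<Longrightarrow> ennreal a \<le> sph_avg (indicator F) x"
    and gb: "\<And>x. x \<in> H \<Longrightarrow> ennreal b \<le> sph_avg (indicator G) x"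
  shows "a * b * measure lborel H \<le> max C 0 * (measure lborel F powr enn2real (1/p1))
     * (measure lborel G powr enn2real (1/p2)) * (measure lborel H powr enn2real (1/p3))"
proof -
  define X1 where "X1 = measure lborel F powr enn2real (1/p1)"
  define X2 where "X2 = measure lborel G powr enn2real (1/p2)"
  define X3 where "X3 = measure lborel H powr enn2real (1/p3)"
  have "ennreal (a * b * measure lborel H) = ennreal (a * b) * emeasure lborel H"
    using H a b by (simp add: emeasure_eq_ennreal_measure ennreal_mult)
  also have "\<dots> \<le> LambdaG (indicator F) (indicator G) (indicator H)"
    by (rule LambdaG_lower[OF H(1) a b fa gb])
  also have "\<dots> \<le> ennreal C * Lp_norm p1 (indicator F) * Lp_norm p2 (indicator G) * Lp_norm p3 (indicator H)"
  proof (rule bound)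
    show "indicator F \<in> borel_measurable lborel" using F(1) by simp
    show "indicator G \<in> borel_measurable lborel" using G(1) by simp
    show "indicator H \<in> borel_measurable lborel" using H(1) by simp
  qed simp_all
  also have "\<dots> \<le> ennreal (max C 0) * ennreal X1 * ennreal X2 * ennreal X3"
  proof -
    have c: "ennreal C = ennreal (max C 0)" by (cases "C \<le> 0") (auto simp: ennreal_neg max_def)
    have 1: "Lp_norm p1 (indicator F) \<le> ennreal X1" unfolding X1_def by (rule Lp_norm_indicator[OF F p_range(1)])
    have 2: "Lp_norm p2 (indicator G) \<le> ennreal X2" unfolding X2_def by (rule Lp_norm_indicator[OF G p_range(2)])
    have 3: "Lp_norm p3 (indicator H) \<le> ennreal X3" unfolding X3_def by (rule Lp_norm_indicator[OF H p_range(3)])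
    show ?thesis unfolding c
      by (intro mult_mono 1 2 3 order_refl zero_le)
  qed
  also have "\<dots> = ennreal (max C 0 * X1 * X2 * X3)"
    by (simp add: ennreal_mult X1_def X2_def X3_def)
  finally show ?thesis unfolding X1_def X2_def X3_def
    by (subst (asm) ennreal_le_iff) (simp_all add: X1_def X2_def X3_def)
qed



lemma q_facts:
  assumes p: "1 \<le> (p::ennreal)"
  shows "1/p = ennreal (enn2real (1/p))" "0 \<le> enn2real (1/p)" "enn2real (1/p) \<le> 1"
proof -
  have "1/p \<le> 1"
  proof (cases "p = \<infinity>")
    case True then show ?thesis by simp
  next
    case False
    define r where "r = enn2real p"
    have pt: "p < top" using False by (simp add: top.not_eq_extremum)
    have r: "p = ennreal r" "r \<ge> 1"
      using pt enn2real_mono[OF p pt] by (simp_all add: r_def)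
    have "1 / p = ennreal (1 / r)" using r divide_ennreal[of 1 r] by simp
    then show ?thesis using r by simp
  qed
  then have lt: "1/p < top" by (simp add: le_less_trans)
  show "1/p = ennreal (enn2real (1/p))" using lt by simp
  show "0 \<le> enn2real (1/p)" by simp
  show "enn2real (1/p) \<le> 1" using enn2real_mono[OF \<open>1/p \<le> 1\<close>] by simp
qed

lemma powr_split:
  fixes w R q :: real
  assumes "0 < w" "0 < R"
  shows "(w * R ^ n) powr q = w powr q * R powr (real n * q)"
proof -
  have "R ^ n = R powr real n" using assms by (simp add: powr_realpow)
  then show ?thesis by (simp add: powr_mult powr_powr)
qed

lemma norm_unit_le: "norm (y /\<^sub>R norm y) \<le> 1"
  for y :: "'a::real_normed_vector"
  by (cases "y = 0") simp_all

lemma norm_unit: "y \<noteq> 0 \<Longrightarrow> norm (y /\<^sub>R norm y) = 1"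
  for y :: "'a::real_normed_vector"
  by simp

lemma lower_full:
  fixes A :: "(real^'n::finite) set" and x :: "real^'n"
  assumes A: "A \<in> sets borel" and inA: "\<And>y. y \<noteq> 0 \<Longrightarrow> x - y /\<^sub>R norm y \<in> A"
  shows "ennreal (real CARD('n) * unit_ball_vol (real CARD('n))) \<le> sph_avg (indicator A) x"
proof -
  define K where "K = cball (0::real^'n) 1 - {0}"
  have K: "K \<in> sets lborel" "K \<subseteq> cball 0 1" unfolding K_def by auto
  have "emeasure lborel K = emeasure lborel (cball (0::real^'n) 1)"
    unfolding K_def by (rule emeasure_Diff_null_set) auto
  also have "\<dots> = ennreal (unit_ball_vol (real CARD('n)))"
    using emeasure_cball[of 1 "0::real^'n"] by simp
  finally have mK: "emeasure lborel K = ennreal (unit_ball_vol (real CARD('n)))" .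
  have "of_nat CARD('n) * emeasure lborel K \<le> sph_avg (indicator A) x"
    by (rule sph_avg_lower[OF A K]) (use inA in \<open>auto simp: K_def\<close>)
  moreover have "of_nat CARD('n) * emeasure lborel K = ennreal (real CARD('n) * unit_ball_vol (real CARD('n)))"
    unfolding mK by (subst ennreal_mult) (simp_all add: ennreal_of_nat_eq_real_of_nat)
  ultimately show ?thesis by simp
qed

lemma lower_cap:
  fixes x :: "real^'n::finite" and \<delta> :: real
  assumes d: "0 < \<delta>" "\<delta> \<le> 1" and x: "1 - \<delta>/4 < norm x" "norm x < 1 + \<delta>/4"
  shows "ennreal (real CARD('n) * (unit_ball_vol (real CARD('n)) / (2 * 8 ^ CARD('n)) * (\<delta>/2) ^ (CARD('n) - 1)))
     \<le> sph_avg (indicator (ball 0 \<delta>)) x"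
proof -
  have xn: "norm x > 0" using x d by linarith
  define e where "e = x /\<^sub>R norm x"
  have e: "norm e = 1" using xn by (simp add: e_def)
  have xe: "norm (x - e) < \<delta>/4"
  proof -
    have xeq: "norm x *\<^sub>R e = x" using xn by (simp add: e_def)
    have "x - e = norm x *\<^sub>R e - 1 *\<^sub>R e" by (simp only: xeq scaleR_one)
    also have "\<dots> = (norm x - 1) *\<^sub>R e" by (simp only: scaleR_diff_left)
    finally have "norm (x - e) = \<bar>norm x - 1\<bar>" using e by simp
    then show ?thesis using x by linarith
  qed
  obtain K where K: "K \<in> sets lborel" "K \<subseteq> cball 0 1"
    and Ky: "\<And>y. y \<in> K \<Longrightarrow> y \<noteq> 0 \<and> norm (y /\<^sub>R norm y - e) < \<delta>/2"
    and mK: "ennreal (unit_ball_vol (real CARD('n)) / (2 * 8 ^ CARD('n)) * (\<delta>/2) ^ (CARD('n) - 1)) \<le> emeasure lborel K"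
  proof -
    have h1: "0 < \<delta>/2" "\<delta>/2 \<le> 1" using d by simp_all
    show ?thesis by (rule cap_lower[OF e h1]) (rule that; assumption)
  qed
  have "of_nat CARD('n) * emeasure lborel K \<le> sph_avg (indicator (ball 0 \<delta>)) x"
  proof (rule sph_avg_lower[OF _ K])
    fix y assume y: "y \<in> K"
    have "norm (x - y /\<^sub>R norm y) \<le> norm (x - e) + norm (y /\<^sub>R norm y - e)"
      using norm_triangle_ineq4[of "x - e" "y /\<^sub>R norm y - e"] by simp
    also have "\<dots> < \<delta>/4 + \<delta>/2" using xe Ky[OF y] by linarith
    finally have "norm (x - y /\<^sub>R norm y) < \<delta>" using d by linarith
    then show "x - y /\<^sub>R norm y \<in> ball 0 \<delta>" by simp
  qed simp
  moreover have "ennreal (real CARD('n) * (unit_ball_vol (real CARD('n)) / (2 * 8 ^ CARD('n)) * (\<delta>/2) ^ (CARD('n) - 1)))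
      \<le> of_nat CARD('n) * emeasure lborel K"
  proof -
    have "ennreal (real CARD('n) * (unit_ball_vol (real CARD('n)) / (2 * 8 ^ CARD('n)) * (\<delta>/2) ^ (CARD('n) - 1)))
      = of_nat CARD('n) * ennreal (unit_ball_vol (real CARD('n)) / (2 * 8 ^ CARD('n)) * (\<delta>/2) ^ (CARD('n) - 1))"
      using d by (subst ennreal_mult) (simp_all add: ennreal_of_nat_eq_real_of_nat)
    also have "\<dots> \<le> of_nat CARD('n) * emeasure lborel K" by (rule mult_left_mono[OF mK]) simp
    finally show ?thesis .
  qed
  ultimately show ?thesis by (rule order_trans[rotated])
qed

lemma shell_lower:
  fixes t :: real
  assumes "0 < t" "t \<le> 1"
  shows "unit_ball_vol (real CARD('n::finite)) * ((1 + t) ^ CARD('n) - (1 - t) ^ CARD('n)) \<ge> unit_ball_vol (real CARD('n)) * t"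
proof -
  have "1 + real CARD('n) * t \<le> (1 + t) ^ CARD('n)" by (rule Bernoulli_inequality) (use assms in simp)
  moreover have "t \<le> real CARD('n) * t" using assms by simp
  moreover have "(1 - t) ^ CARD('n) \<le> 1" using assms by (intro power_le_one) auto
  ultimately have "t \<le> (1 + t) ^ CARD('n) - (1 - t) ^ CARD('n)" by linarith
  then show ?thesis by (intro mult_left_mono) simp_all
qed

lemma shell_upper:
  fixes t :: real
  assumes "0 < t" "t \<le> 1"
  shows "(1 + t) ^ CARD('n::finite) - (1 - t) ^ CARD('n) \<le> real CARD('n) * 2 ^ CARD('n) * t"
proof -
  obtain n where n: "CARD('n) = Suc n" using zero_less_card_finite not0_implies_Suc by blast
  have "(1 + t) ^ Suc n - (1 - t) ^ Suc n \<le> real (Suc n) * ((1 + t) - (1 - t)) * (1 + t) ^ n"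
    by (rule pow_diff_le) (use assms in auto)
  also have "\<dots> = real (Suc n) * (2 * t) * (1 + t) ^ n" by simp
  also have "\<dots> \<le> real (Suc n) * (2 * t) * 2 ^ n"
    using assms by (intro mult_left_mono power_mono) auto
  also have "\<dots> = real (Suc n) * 2 ^ Suc n * t" by simp
  finally show ?thesis unfolding n .
qed



context
  fixes p1 p2 p3 :: ennreal and C :: real
  assumes p_range: "1 \<le> p1" "1 \<le> p2" "1 \<le> p3"
    and bound: "\<And>f g h :: real ^ 'n::finite \<Rightarrow> real.
        f \<in> borel_measurable lborel \<Longrightarrow> g \<in> borel_measurable lborel \<Longrightarrow>
        h \<in> borel_measurable lborel \<Longrightarrow>
        (\<forall>x. 0 \<le> f x) \<Longrightarrow> (\<forall>x. 0 \<le> g x) \<Longrightarrow> (\<forall>x. 0 \<le> h x) \<Longrightarrow>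
        LambdaG f g h \<le> ennreal C * Lp_norm p1 f * Lp_norm p2 g * Lp_norm p3 h"
begin

lemma ball_facts:
  assumes "r > 0"
  shows "ball (0::real^'n) r \<in> sets lborel" "emeasure lborel (ball (0::real^'n) r) < \<infinity>"
    "measure lborel (ball (0::real^'n) r) = unit_ball_vol (real CARD('n)) * r ^ CARD('n)"
    "measure lborel (ball (0::real^'n) r) > 0"
  using assms emeasure_lborel_ball_finite[of "0::real^'n" r] measure_ball_eq[of r "0::real^'n"]
  by simp_all

lemma case1: "1 \<le> enn2real (1/p1) + enn2real (1/p2) + enn2real (1/p3)"
proof -
  define q1 where "q1 = enn2real (1/p1)"
  define q2 where "q2 = enn2real (1/p2)"
  define q3 where "q3 = enn2real (1/p3)"
  define D where "D = CARD('n)"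
  define w where "w = unit_ball_vol (real D)"
  have w: "w > 0" by (simp add: w_def)
  have D: "D > 0" by (simp add: D_def)
  have q: "0 \<le> q1" "0 \<le> q2" "0 \<le> q3" using q_facts p_range by (simp_all add: q1_def q2_def q3_def)
  define s where "s = q1 + q2 + q3"
  define A where "A = (real D * w) * (real D * w) * w / 2 ^ D"
  define B where "B = max C 0 * w powr s"
  have A: "A > 0" using w D by (simp add: A_def)
  have "real D * 1 \<le> real D * s"
  proof (rule large_exp[OF A, of 2])
    fix R :: real assume R: "2 \<le> R"
    have R1: "R - 1 > 0" "R > 0" using R by simp_all
    let ?F = "ball (0::real^'n) R" and ?H = "ball (0::real^'n) (R - 1)"
    note F = ball_facts[OF R1(2)] and H = ball_facts[OF R1(1)]
    have lb: "ennreal (real D * w) \<le> sph_avg (indicator ?F) x" if x: "x \<in> ?H" for x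
      unfolding D_def w_def
    proof (rule lower_full)
      fix y :: "real^'n" assume "y \<noteq> 0"
      have "norm (x - y /\<^sub>R norm y) \<le> norm x + norm (y /\<^sub>R norm y)" by (rule norm_triangle_ineq4)
      also have "\<dots> < R" using x norm_unit_le[of y] by simp
      finally show "x - y /\<^sub>R norm y \<in> ?F" by simp
    qed simp
    have Dw: "real D * w \<ge> 0" using w by simp
    have key: "real D * w * (real D * w) * measure lborel ?H \<le> max C 0 * (measure lborel ?F powr q1)
     * (measure lborel ?F powr q2) * (measure lborel ?H powr q3)"
      unfolding q1_def q2_def q3_def
      by (rule apply_bound[OF p_range bound F(1,2,4) F(1,2,4) H(1,2,4) Dw Dw lb lb])
    have mH: "measure lborel ?H = w * (R - 1) ^ D" using H(3) by (simp add: w_def D_def)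
    have mF: "measure lborel ?F = w * R ^ D" using F(3) by (simp add: w_def D_def)
    have "A * R powr (real D * 1) = real D * w * (real D * w) * (w * (R / 2) ^ D)"
      using R1 by (simp add: A_def powr_realpow power_divide)
    also have "\<dots> \<le> real D * w * (real D * w) * measure lborel ?H"
      unfolding mH using w R1 Dw R by (intro mult_left_mono power_mono) auto
    also have "\<dots> \<le> max C 0 * (measure lborel ?F powr q1) * (measure lborel ?F powr q2) * (measure lborel ?H powr q3)"
      by (rule key)
    also have "\<dots> \<le> max C 0 * (measure lborel ?F powr q1) * (measure lborel ?F powr q2) * (measure lborel ?F powr q3)"
    proof (intro mult_left_mono powr_mono2)
      show "measure lborel ?H \<le> measure lborel ?F" unfolding mH mF using w R1
        by (intro mult_left_mono power_mono) auto
    qed (use q in auto)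
    also have "\<dots> = max C 0 * (measure lborel ?F powr s)"
      by (simp add: s_def powr_add mult.assoc)
    also have "\<dots> = B * R powr (real D * s)"
      unfolding mF B_def using w R1 by (simp add: powr_split mult.assoc)
    finally show "A * R powr (real D * 1) \<le> B * R powr (real D * s)" .
  qed simp
  then show ?thesis using D by (simp add: s_def q1_def q2_def q3_def)
qed

lemma cancel_shell:
  fixes X Y m q L :: real
  assumes k: "X * m \<le> Y * m powr q" and m: "m > 0" and q: "0 \<le> q" "q \<le> 1"
    and L: "L \<le> m" "L > 0" and X: "X \<ge> 0"
  shows "X * L powr (1 - q) \<le> Y"
proof -
  have "m = m powr (1 - q) * m powr q" using m by (simp add: powr_add[symmetric])
  then have "(X * m powr (1 - q)) * m powr q \<le> Y * m powr q" using k by (simp add: mult.assoc)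
  then have "X * m powr (1 - q) \<le> Y" using m by simp
  moreover have "X * L powr (1 - q) \<le> X * m powr (1 - q)"
    using L q X by (intro mult_left_mono powr_mono2) auto
  ultimately show ?thesis by linarith
qed

lemma shellH_facts:
  fixes \<delta> :: real
  assumes d: "0 < \<delta>" "\<delta> \<le> 1"
  defines "H \<equiv> ball (0::real^'n) (1 + \<delta>/4) - cball 0 (1 - \<delta>/4)"
  shows "H \<in> sets lborel" "emeasure lborel H < \<infinity>"
    "measure lborel H \<ge> unit_ball_vol (real CARD('n)) * (\<delta>/4)" "measure lborel H > 0"
proof -
  have h: "0 \<le> 1 - \<delta>/4" "1 - \<delta>/4 < 1 + \<delta>/4" using d by simp_all
  show "H \<in> sets lborel" "emeasure lborel H < \<infinity>" unfolding H_def using shell_facts[OF h] by simp_all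
  have "measure lborel H = unit_ball_vol (real CARD('n)) * ((1 + \<delta>/4) ^ CARD('n) - (1 - \<delta>/4) ^ CARD('n))"
    unfolding H_def using shell_facts[OF h] by simp
  also have "\<dots> \<ge> unit_ball_vol (real CARD('n)) * (\<delta>/4)"
    by (rule shell_lower) (use d in simp_all)
  finally show "measure lborel H \<ge> unit_ball_vol (real CARD('n)) * (\<delta>/4)" .
  moreover have "unit_ball_vol (real CARD('n)) * (\<delta>/4) > 0" using d by simp
  ultimately show "measure lborel H > 0" by linarith
qed

lemma case2: "enn2real (1/p1) + enn2real (1/p2) + real CARD('n) * enn2real (1/p3) \<le> real CARD('n)"
proof -
  define q1 where "q1 = enn2real (1/p1)"
  define q2 where "q2 = enn2real (1/p2)"
  define q3 where "q3 = enn2real (1/p3)"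
  define D where "D = CARD('n)"
  define w where "w = unit_ball_vol (real D)"
  have w: "w > 0" by (simp add: w_def)
  have D: "D > 0" by (simp add: D_def)
  have q: "0 \<le> q1" "0 \<le> q2" "0 \<le> q3" using q_facts p_range by (simp_all add: q1_def q2_def q3_def)
  define K where "K = w * (real D * 2 ^ D)"
  have K: "K > 0" using w D by (simp add: K_def)
  define A where "A = (real D * w) * (real D * w) * (w / 2 ^ D)"
  define B where "B = max C 0 * K powr (q1 + q2) * (w / 2 ^ D) powr q3"
  have A: "A > 0" using w D by (simp add: A_def)
  have "q1 + q2 + real D * q3 \<le> real D"
  proof (rule small_exp[OF A, of "1/2"])
    fix \<delta> :: real assume d: "0 < \<delta>" "\<delta> \<le> 1/2"
    let ?S = "ball (0::real^'n) (1 + \<delta>) - cball 0 (1 - \<delta>)" and ?H = "ball (0::real^'n) (\<delta>/2)"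
    have h: "0 \<le> 1 - \<delta>" "1 - \<delta> < 1 + \<delta>" using d by simp_all
    note S = shell_facts[OF h]
    have mS: "measure lborel ?S = w * ((1 + \<delta>) ^ D - (1 - \<delta>) ^ D)" using S(3) by (simp add: w_def D_def)
    have mSu: "measure lborel ?S \<le> K * \<delta>"
    proof -
      have "(1 + \<delta>) ^ D - (1 - \<delta>) ^ D \<le> real D * 2 ^ D * \<delta>"
        unfolding D_def by (rule shell_upper) (use d in simp_all)
      then show ?thesis unfolding mS K_def using w by (simp add: mult_left_mono mult.assoc)
    qed
    have mSp: "measure lborel ?S > 0"
    proof -
      have "w * \<delta> \<le> w * ((1 + \<delta>) ^ D - (1 - \<delta>) ^ D)"
        unfolding w_def D_def by (rule shell_lower) (use d in simp_all)
      then show ?thesis unfolding mS using w d by (smt (verit) mult_pos_pos)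
    qed
    have d2: "\<delta>/2 > 0" using d by simp
    note H = ball_facts[OF d2]
    have lb: "ennreal (real D * w) \<le> sph_avg (indicator ?S) x" if x: "x \<in> ?H" for x
      unfolding D_def w_def
    proof (rule lower_full)
      fix y :: "real^'n" assume y: "y \<noteq> 0"
      have u: "norm (y /\<^sub>R norm y) = 1" using y by simp
      have "norm (x - y /\<^sub>R norm y) \<le> norm x + norm (y /\<^sub>R norm y)" by (rule norm_triangle_ineq4)
      moreover have "norm (y /\<^sub>R norm y) - norm x \<le> norm (x - y /\<^sub>R norm y)"
        using norm_triangle_ineq2[of "y /\<^sub>R norm y" x] norm_minus_commute[of x "y /\<^sub>R norm y"] by linarith
      moreover have "norm x < \<delta>/2" using x by simp
      ultimately have "norm (x - y /\<^sub>R norm y) < 1 + \<delta>" "norm (x - y /\<^sub>R norm y) > 1 - \<delta>"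
        using u d by linarith+
      then show "x - y /\<^sub>R norm y \<in> ?S" by simp
    qed simp
    have Dw: "real D * w \<ge> 0" using w by simp
    have key: "real D * w * (real D * w) * measure lborel ?H \<le> max C 0 * (measure lborel ?S powr q1)
     * (measure lborel ?S powr q2) * (measure lborel ?H powr q3)"
      unfolding q1_def q2_def q3_def
      by (rule apply_bound[OF p_range bound S(1,2) mSp S(1,2) mSp H(1,2,4) Dw Dw lb lb])
    have mH: "measure lborel ?H = (w / 2 ^ D) * \<delta> ^ D"
      using H(3) by (simp add: w_def D_def power_divide)
    have "A * \<delta> powr real D = real D * w * (real D * w) * measure lborel ?H"
      unfolding mH A_def using d by (simp add: powr_realpow)
    also have "\<dots> \<le> max C 0 * (measure lborel ?S powr q1) * (measure lborel ?S powr q2) * (measure lborel ?H powr q3)"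
      by (rule key)
    also have "\<dots> \<le> max C 0 * ((K * \<delta>) powr q1) * ((K * \<delta>) powr q2) * (measure lborel ?H powr q3)"
    proof -
      have "measure lborel ?S powr q1 \<le> (K * \<delta>) powr q1" using mSu mSp q by (intro powr_mono2) auto
      moreover have "measure lborel ?S powr q2 \<le> (K * \<delta>) powr q2" using mSu mSp q by (intro powr_mono2) auto
      ultimately show ?thesis by (intro mult_right_mono mult_mono) auto
    qed
    also have "\<dots> = max C 0 * (K powr (q1 + q2) * \<delta> powr (q1 + q2)) * ((w / 2 ^ D) powr q3 * \<delta> powr (real D * q3))"
    proof -
      have e1: "(K * \<delta>) powr q1 * (K * \<delta>) powr q2 = K powr (q1 + q2) * \<delta> powr (q1 + q2)"
        by (simp add: powr_add powr_mult mult_ac)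
      have e2: "measure lborel ?H powr q3 = (w / 2 ^ D) powr q3 * \<delta> powr (real D * q3)"
        unfolding mH by (rule powr_split) (use w d in simp_all)
      show ?thesis unfolding e2 e1[symmetric] by (simp add: mult.assoc)
    qed
    also have "\<dots> = B * \<delta> powr (q1 + q2 + real D * q3)"
      unfolding B_def by (simp add: powr_add mult_ac)
    finally show "A * \<delta> powr real D \<le> B * \<delta> powr (q1 + q2 + real D * q3)" .
  qed simp
  then show ?thesis by (simp add: q1_def q2_def q3_def D_def)
qed

lemma case3: "real CARD('n) * enn2real (1/p1) + real CARD('n) * enn2real (1/p2) + enn2real (1/p3) \<le> 2 * real CARD('n) - 1"
proof -
  define q1 where "q1 = enn2real (1/p1)"
  define q2 where "q2 = enn2real (1/p2)"
  define q3 where "q3 = enn2real (1/p3)"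
  define D where "D = CARD('n)"
  define w where "w = unit_ball_vol (real D)"
  have w: "w > 0" by (simp add: w_def)
  have D: "D > 0" by (simp add: D_def)
  have q: "0 \<le> q1" "0 \<le> q2" "0 \<le> q3" "q3 \<le> 1" using q_facts p_range by (simp_all add: q1_def q2_def q3_def)
  define c0 where "c0 = w / (2 * 8 ^ D)"
  define a0 where "a0 = real D * c0 / 2 ^ (D - 1)"
  have a0: "a0 > 0" using w D by (simp add: a0_def c0_def)
  define A where "A = a0 * a0 * (w / 4) powr (1 - q3)"
  define B where "B = max C 0 * w powr (q1 + q2)"
  have A: "A > 0" using a0 w by (simp add: A_def)
  have "real D * (q1 + q2) \<le> 2 * real (D - 1) + (1 - q3)"
  proof (rule small_exp[OF A, of 1])
    fix \<delta> :: real assume d: "0 < \<delta>" "\<delta> \<le> 1"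
    let ?F = "ball (0::real^'n) \<delta>" and ?H = "ball (0::real^'n) (1 + \<delta>/4) - cball 0 (1 - \<delta>/4)"
    note F = ball_facts[OF d(1)] and H = shellH_facts[OF d]
    define a where "a = real D * (c0 * (\<delta>/2) ^ (D - 1))"
    have aeq: "a = a0 * \<delta> ^ (D - 1)" by (simp add: a_def a0_def power_divide)
    have a: "a \<ge> 0" using w d by (simp add: a_def c0_def)
    have lb: "ennreal a \<le> sph_avg (indicator ?F) x" if x: "x \<in> ?H" for x
      unfolding a_def c0_def D_def w_def
      by (rule lower_cap) (use x d in auto)
    have key: "a * a * measure lborel ?H \<le> max C 0 * (measure lborel ?F powr q1)
     * (measure lborel ?F powr q2) * (measure lborel ?H powr q3)"
      unfolding q1_def q2_def q3_def
      by (rule apply_bound[OF p_range bound F(1,2,4) F(1,2,4) H(1,2,4) a a lb lb])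
    have wd: "w * (\<delta>/4) > 0" using w d by simp
    have can: "a * a * (w * (\<delta>/4)) powr (1 - q3) \<le> max C 0 * (measure lborel ?F powr q1) * (measure lborel ?F powr q2)"
      by (rule cancel_shell[OF key H(4) q(3,4) _ wd]) (use H(3) a in \<open>simp_all add: w_def D_def\<close>)
    have mF: "measure lborel ?F = w * \<delta> ^ D" using F(3) by (simp add: w_def D_def)
    have "A * \<delta> powr (2 * real (D - 1) + (1 - q3)) = a * a * (w * (\<delta>/4)) powr (1 - q3)"
    proof -
      have e1: "(w * (\<delta>/4)) powr (1 - q3) = (w / 4) powr (1 - q3) * \<delta> powr (1 - q3)"
        by (simp add: powr_mult[symmetric])
      have e2: "\<delta> powr (2 * real (D - 1)) = \<delta> ^ (D - 1) * \<delta> ^ (D - 1)"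
        using d by (simp add: powr_realpow[symmetric] powr_add[symmetric])
      show ?thesis unfolding e1 aeq A_def powr_add e2 by (simp add: mult_ac)
    qed
    also have "\<dots> \<le> max C 0 * (measure lborel ?F powr q1) * (measure lborel ?F powr q2)" by (rule can)
    also have "\<dots> = B * \<delta> powr (real D * (q1 + q2))"
    proof -
      have "measure lborel ?F powr q1 * measure lborel ?F powr q2 = measure lborel ?F powr (q1 + q2)"
        by (simp add: powr_add)
      also have "\<dots> = w powr (q1 + q2) * \<delta> powr (real D * (q1 + q2))"
        unfolding mF by (rule powr_split) (use w d in simp_all)
      finally show ?thesis unfolding B_def by (simp add: mult.assoc)
    qed
    finally show "A * \<delta> powr (2 * real (D - 1) + (1 - q3)) \<le> B * \<delta> powr (real D * (q1 + q2))" .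
  qed simp
  moreover have "real (D - 1) = real D - 1" using D by simp
  ultimately show ?thesis by (simp add: q1_def q2_def q3_def D_def algebra_simps)
qed

lemma case4: "real CARD('n) * enn2real (1/p1) + enn2real (1/p3) \<le> real CARD('n)"
proof -
  define q1 where "q1 = enn2real (1/p1)"
  define q2 where "q2 = enn2real (1/p2)"
  define q3 where "q3 = enn2real (1/p3)"
  define D where "D = CARD('n)"
  define w where "w = unit_ball_vol (real D)"
  have w: "w > 0" by (simp add: w_def)
  have D: "D > 0" by (simp add: D_def)
  have q: "0 \<le> q1" "0 \<le> q2" "0 \<le> q3" "q3 \<le> 1" using q_facts p_range by (simp_all add: q1_def q2_def q3_def)
  define c0 where "c0 = w / (2 * 8 ^ D)"
  define a0 where "a0 = real D * c0 / 2 ^ (D - 1)"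
  have a0: "a0 > 0" using w D by (simp add: a0_def c0_def)
  define b where "b = real D * w"
  have b: "b > 0" using w D by (simp add: b_def)
  let ?G = "ball (0::real^'n) 3"
  have three: "(3::real) > 0" by simp
  note G = ball_facts[OF three]
  define A where "A = a0 * b * (w / 4) powr (1 - q3)"
  define B where "B = max C 0 * w powr q1 * measure lborel ?G powr q2"
  have A: "A > 0" using a0 w b by (simp add: A_def)
  have "real D * q1 \<le> real (D - 1) + (1 - q3)"
  proof (rule small_exp[OF A, of 1])
    fix \<delta> :: real assume d: "0 < \<delta>" "\<delta> \<le> 1"
    let ?F = "ball (0::real^'n) \<delta>" and ?H = "ball (0::real^'n) (1 + \<delta>/4) - cball 0 (1 - \<delta>/4)"
    note F = ball_facts[OF d(1)] and H = shellH_facts[OF d]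
    define a where "a = real D * (c0 * (\<delta>/2) ^ (D - 1))"
    have aeq: "a = a0 * \<delta> ^ (D - 1)" by (simp add: a_def a0_def power_divide)
    have a: "a \<ge> 0" using w d by (simp add: a_def c0_def)
    have lb: "ennreal a \<le> sph_avg (indicator ?F) x" if x: "x \<in> ?H" for x
      unfolding a_def c0_def D_def w_def
      by (rule lower_cap) (use x d in auto)
    have lbG: "ennreal b \<le> sph_avg (indicator ?G) x" if x: "x \<in> ?H" for x
      unfolding b_def D_def w_def
    proof (rule lower_full)
      fix y :: "real^'n" assume "y \<noteq> 0"
      have "norm (x - y /\<^sub>R norm y) \<le> norm x + norm (y /\<^sub>R norm y)" by (rule norm_triangle_ineq4)
      moreover have "norm x < 1 + \<delta>/4" using x by simp
      ultimately have "norm (x - y /\<^sub>R norm y) < 3" using norm_unit_le[of y] d by linarith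
      then show "x - y /\<^sub>R norm y \<in> ?G" by simp
    qed simp
    have b0: "b \<ge> 0" using b by simp
    have key: "a * b * measure lborel ?H \<le> max C 0 * (measure lborel ?F powr q1)
     * (measure lborel ?G powr q2) * (measure lborel ?H powr q3)"
      unfolding q1_def q2_def q3_def
      by (rule apply_bound[OF p_range bound F(1,2,4) G(1,2,4) H(1,2,4) a b0 lb lbG])
    have wd: "w * (\<delta>/4) > 0" using w d by simp
    have can: "a * b * (w * (\<delta>/4)) powr (1 - q3) \<le> max C 0 * (measure lborel ?F powr q1) * (measure lborel ?G powr q2)"
      by (rule cancel_shell[OF key H(4) q(3,4) _ wd]) (use H(3) a b in \<open>simp_all add: w_def D_def\<close>)
    have mF: "measure lborel ?F = w * \<delta> ^ D" using F(3) by (simp add: w_def D_def)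
    have "A * \<delta> powr (real (D - 1) + (1 - q3)) = a * b * (w * (\<delta>/4)) powr (1 - q3)"
    proof -
      have e1: "(w * (\<delta>/4)) powr (1 - q3) = (w / 4) powr (1 - q3) * \<delta> powr (1 - q3)"
        by (simp add: powr_mult[symmetric])
      have e2: "\<delta> powr (real (D - 1)) = \<delta> ^ (D - 1)"
        using d by (simp add: powr_realpow)
      show ?thesis unfolding e1 aeq A_def powr_add e2 by (simp add: mult_ac)
    qed
    also have "\<dots> \<le> max C 0 * (measure lborel ?F powr q1) * (measure lborel ?G powr q2)" by (rule can)
    also have "\<dots> = B * \<delta> powr (real D * q1)"
    proof -
      have "measure lborel ?F powr q1 = w powr q1 * \<delta> powr (real D * q1)"
        unfolding mF by (rule powr_split) (use w d in simp_all)
      then show ?thesis unfolding B_def by (simp add: mult_ac)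
    qed
    finally show "A * \<delta> powr (real (D - 1) + (1 - q3)) \<le> B * \<delta> powr (real D * q1)" .
  qed simp
  moreover have "real (D - 1) = real D - 1" using D by simp
  ultimately show ?thesis by (simp add: q1_def q2_def q3_def D_def algebra_simps)
qed

end



lemma div_conv:
  assumes p: "1 \<le> (p::ennreal)"
  shows "1 / p = ennreal (enn2real (1/p))"
    "of_nat CARD('n::finite) / p = ennreal (real CARD('n) * enn2real (1/p))"
proof -
  show h: "1 / p = ennreal (enn2real (1/p))" by (rule q_facts(1)[OF p])
  have "of_nat CARD('n) / p = of_nat CARD('n) * (1 / p)" by (simp add: ennreal_times_divide)
  also have "\<dots> = ennreal (real CARD('n)) * ennreal (enn2real (1/p))"
    by (subst h[symmetric]) (simp add: ennreal_of_nat_eq_real_of_nat)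
  also have "\<dots> = ennreal (real CARD('n) * enn2real (1/p))" by (simp add: ennreal_mult)
  finally show "of_nat CARD('n::finite) / p = ennreal (real CARD('n) * enn2real (1/p))" .
qed

theorem mainTheorem15:
  fixes p1 p2 p3 :: ennreal and C :: real
  assumes dim: "CARD('n::finite) \<ge> 2"
    and p_range: "1 \<le> p1" "1 \<le> p2" "1 \<le> p3"
    and bound: "\<And>f g h :: real ^ 'n \<Rightarrow> real.
        f \<in> borel_measurable lborel \<Longrightarrow> g \<in> borel_measurable lborel \<Longrightarrow>
        h \<in> borel_measurable lborel \<Longrightarrow>
        (\<forall>x. 0 \<le> f x) \<Longrightarrow> (\<forall>x. 0 \<le> g x) \<Longrightarrow> (\<forall>x. 0 \<le> h x) \<Longrightarrow>
        LambdaG f g h \<le> ennreal C * Lp_norm p1 f * Lp_norm p2 g * Lp_norm p3 h"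
  shows "1 / p1 + 1 / p2 + 1 / p3 \<ge> 1 \<and>
         1 / p1 + 1 / p2 + of_nat CARD('n) / p3 \<le> of_nat CARD('n) \<and>
         of_nat CARD('n) / p1 + of_nat CARD('n) / p2 + 1 / p3 \<le> 2 * of_nat CARD('n) - 1 \<and>
         of_nat CARD('n) / p1 + 1 / p3 \<le> of_nat CARD('n) \<and>
         of_nat CARD('n) / p2 + 1 / p3 \<le> (of_nat CARD('n) :: ennreal)"
proof -
  have bound': "LambdaG f g h \<le> ennreal C * Lp_norm p2 f * Lp_norm p1 g * Lp_norm p3 h"
    if "f \<in> borel_measurable lborel" "g \<in> borel_measurable lborel" "h \<in> borel_measurable lborel"
       "\<forall>x. 0 \<le> f x" "\<forall>x. 0 \<le> g x" "\<forall>x. 0 \<le> h x"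
    for f g h :: "real ^ 'n \<Rightarrow> real"
  proof -
    have "LambdaG f g h = LambdaG g f h" unfolding LambdaG_def by (simp add: mult_ac)
    also have "\<dots> \<le> ennreal C * Lp_norm p1 g * Lp_norm p2 f * Lp_norm p3 h"
      by (rule bound) (use that in auto)
    finally show ?thesis by (simp add: mult_ac)
  qed
  define q1 where "q1 = enn2real (1/p1)"
  define q2 where "q2 = enn2real (1/p2)"
  define q3 where "q3 = enn2real (1/p3)"
  define D where "D = real CARD('n)"
  have q: "0 \<le> q1" "0 \<le> q2" "0 \<le> q3" using q_facts p_range by (simp_all add: q1_def q2_def q3_def)
  have D: "D \<ge> 2" using dim by (simp add: D_def)
  have c1: "1 \<le> q1 + q2 + q3" unfolding q1_def q2_def q3_def by (rule case1[OF p_range bound])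
  have c2: "q1 + q2 + D * q3 \<le> D" unfolding q1_def q2_def q3_def D_def by (rule case2[OF p_range bound])
  have c3: "D * q1 + D * q2 + q3 \<le> 2 * D - 1" unfolding q1_def q2_def q3_def D_def by (rule case3[OF p_range bound])
  have c4: "D * q1 + q3 \<le> D" unfolding q1_def q2_def q3_def D_def by (rule case4[OF p_range bound])
  have c5: "D * q2 + q3 \<le> D" unfolding q1_def q2_def q3_def D_def by (rule case4[OF p_range(2) p_range(1) p_range(3) bound'])
  have e1: "1 / p1 = ennreal q1" "of_nat CARD('n) / p1 = ennreal (D * q1)"
    using div_conv[OF p_range(1)] by (simp_all add: q1_def D_def)
  have e2: "1 / p2 = ennreal q2" "of_nat CARD('n) / p2 = ennreal (D * q2)"
    using div_conv[OF p_range(2)] by (simp_all add: q2_def D_def)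
  have e3: "1 / p3 = ennreal q3" "of_nat CARD('n) / p3 = ennreal (D * q3)"
    using div_conv[OF p_range(3)] by (simp_all add: q3_def D_def)
  have eD: "(of_nat CARD('n) :: ennreal) = ennreal D" by (simp add: D_def ennreal_of_nat_eq_real_of_nat)
  have e2D: "2 * (of_nat CARD('n) :: ennreal) - 1 = ennreal (2 * D - 1)"
  proof -
    have "2 * (of_nat CARD('n) :: ennreal) = ennreal (2 * D)"
      unfolding eD using D by (subst ennreal_mult) simp_all
    then show ?thesis using D ennreal_minus[of 1 "2 * D"] by simp
  qed
  have Dq: "0 \<le> D * q1" "0 \<le> D * q2" "0 \<le> D * q3" using q D by simp_all
  have s1: "ennreal q1 + ennreal q2 + ennreal q3 = ennreal (q1 + q2 + q3)" using q by simp
  have s2: "ennreal q1 + ennreal q2 + ennreal (D * q3) = ennreal (q1 + q2 + D * q3)" using q Dq by simp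
  have s3: "ennreal (D * q1) + ennreal (D * q2) + ennreal q3 = ennreal (D * q1 + D * q2 + q3)" using q Dq by simp
  have s4: "ennreal (D * q1) + ennreal q3 = ennreal (D * q1 + q3)" using q Dq by simp
  have s5: "ennreal (D * q2) + ennreal q3 = ennreal (D * q2 + q3)" using q Dq by simp
  have g1: "1 \<le> ennreal (q1 + q2 + q3)" using ennreal_leI[OF c1] by simp
  have g2: "ennreal (q1 + q2 + D * q3) \<le> ennreal D" by (rule ennreal_leI[OF c2])
  have g3: "ennreal (D * q1 + D * q2 + q3) \<le> ennreal (2 * D - 1)" by (rule ennreal_leI[OF c3])
  have g4: "ennreal (D * q1 + q3) \<le> ennreal D" by (rule ennreal_leI[OF c4])
  have g5: "ennreal (D * q2 + q3) \<le> ennreal D" by (rule ennreal_leI[OF c5])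
  show ?thesis
    unfolding e1(2) e2(2) e3(2) e2D
    unfolding e1(1) e2(1) e3(1) eD
    unfolding s1 s2 s3 s4 s5
    using g1 g2 g3 g4 g5 by blast
qed


end
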